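(* Fix $M\ge1$, a finite set $\mathcal F$, a matrix $A\in[0,1]^{|\mathcal F|\times M}$, a vector $\boldsymbol\beta\in[0,1]^{|\mathcal F|}$, $D=\mathrm{diag}(1,\dots,M)$ and a constant $C>0$, and assume the set $\mathcal F_0=\{\mathbf w\in\mathbb{R}^M: A\mathbf w=\boldsymbol\beta,\ \mathbf 0\le\mathbf w\le C\mathbf 1\}$ is nonempty. Let $\theta_{\min}=\min_{\mathbf w\in\mathcal F_0}\mathbf 1^\top AD(\mathbf w+\mathbf 1)$ and $\theta_{\max}=\max_{\mathbf w\in\mathcal F_0}\mathbf 1^\top AD(\mathbf w+\mathbf 1)$. For each $n$, let $\hat A_n$ and $\hat{\boldsymbol\beta}_n$ be random estimators with $\max_{f,y}|\hat A_{n,fy}-A_{fy}|=O_p(n^{-1/2})$ and $\max_f|\hat\beta_{n,f}-\beta_f|=O_p(n^{-1/2})$. Let $\hat m_n=\min_{\mathbf 0\le\mathbf w\le C\mathbf 1}\|\hat A_n\mathbf w-\hat{\boldsymbol\beta}_n\|_\infty$, let $\kappa_n>0$ be deterministic, and define the set-expansion estimators \[\hat\theta_{n,\min}=\min\Big\{\mathbf 1^\top\hat A_nD(\mathbf w+\mathbf 1):\ \|\hat A_n\mathbf w-\hat{\boldsymbol\beta}_n\|_\infty\le\hat m_n+\tfrac{\kappa_n}{\sqrt n},\ \mathbf 0\le\mathbf w\le C\mathbf 1\Big\}\] and $\hat\theta_{n,\max}$ analogously with $\max$ in place of $\min$. If $\kappa_n\to\infty$ and $\kappa_n/\sqrt n\to0$,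 then \[\hat\theta_{n,\min}-\theta_{\min}=O_p\Big(\frac{\kappa_n}{\sqrt n}\Big),\qquad \hat\theta_{n,\max}-\theta_{\max}=O_p\Big(\frac{\kappa_n}{\sqrt n}\Big).\]
   Context: In the application, $A=A_x=[\mathbb{P}(R=1,F=f,Y=y\mid X=x)]_{f,y}$ and $\boldsymbol\beta=\boldsymbol\beta_x=(\mathbb{P}(R=0,F=f\mid X=x))_f$ for a fixed covariate stratum $x$, $n$ is the number of sampled units in that stratum, and $C$ is a known bound such that the true weights $w_x(y)=1/\mathbb{P}(R=1\mid Y=y,X=x)-1$ lie in $[0,C]$ (so $\mathcal F_0\neq\emptyset$); $\theta_{\min},\theta_{\max}$ are the bounds on $\mathbb{E}[Y\mid X=x]$. $\|\cdot\|_\infty$ is the max-absolute-entry norm. *)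

theory Defs
  imports "HOL-Probability.Probability"
begin

text \<open>Index conventions: the rows f range over a finite type 'f (the finite set F);
  the columns y range over {1..M}; vectors w are functions nat => real of which only
  the entries y in {1..M} matter.\<close>

definition matvec :: "('f \<Rightarrow> nat \<Rightarrow> real) \<Rightarrow> nat \<Rightarrow> (nat \<Rightarrow> real) \<Rightarrow> 'f \<Rightarrow> real" where
  "matvec A M w = (\<lambda>f. \<Sum>y\<in>{1..M}. A f y * w y)"

definition norm_inf :: "('f::finite \<Rightarrow> real) \<Rightarrow> real" where
  "norm_inf v = Max (range (\<lambda>f. \<bar>v f\<bar>))"

definition box :: "nat \<Rightarrow> real \<Rightarrow> (nat \<Rightarrow> real) set" where
  "box M C = {w. (\<forall>y\<in>{1..M}. 0 \<le> w y \<and> w y \<le> C) \<and> (\<forall>y. y \<notin> {1..M} \<longrightarrow> w y = 0)}"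

definition objective :: "('f::finite \<Rightarrow> nat \<Rightarrow> real) \<Rightarrow> nat \<Rightarrow> (nat \<Rightarrow> real) \<Rightarrow> real" where
  "objective A M w = (\<Sum>f\<in>UNIV. \<Sum>y\<in>{1..M}. A f y * real y * (w y + 1))"

definition feasible_set :: "('f::finite \<Rightarrow> nat \<Rightarrow> real) \<Rightarrow> ('f \<Rightarrow> real) \<Rightarrow> nat \<Rightarrow> real \<Rightarrow> (nat \<Rightarrow> real) set" where
  "feasible_set A \<beta> M C = {w \<in> box M C. matvec A M w = \<beta>}"

definition theta_min :: "('f::finite \<Rightarrow> nat \<Rightarrow> real) \<Rightarrow> ('f \<Rightarrow> real) \<Rightarrow> nat \<Rightarrow> real \<Rightarrow> real" where
  "theta_min A \<beta> M C = (INF w\<in>feasible_set A \<beta> M C. objective A M w)"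

definition theta_max :: "('f::finite \<Rightarrow> nat \<Rightarrow> real) \<Rightarrow> ('f \<Rightarrow> real) \<Rightarrow> nat \<Rightarrow> real \<Rightarrow> real" where
  "theta_max A \<beta> M C = (SUP w\<in>feasible_set A \<beta> M C. objective A M w)"

definition min_resid :: "('f::finite \<Rightarrow> nat \<Rightarrow> real) \<Rightarrow> ('f \<Rightarrow> real) \<Rightarrow> nat \<Rightarrow> real \<Rightarrow> real" where
  "min_resid A \<beta> M C = (INF w\<in>box M C. norm_inf (\<lambda>f. matvec A M w f - \<beta> f))"

text \<open>expanded feasible set with slack t (= kappa_n / sqrt n)\<close>
definition expanded_set :: "('f::finite \<Rightarrow> nat \<Rightarrow> real) \<Rightarrow> ('f \<Rightarrow> real) \<Rightarrow> nat \<Rightarrow> real \<Rightarrow> real \<Rightarrow> (nat \<Rightarrow> real) set" where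
  "expanded_set A \<beta> M C t = {w \<in> box M C. norm_inf (\<lambda>f. matvec A M w f - \<beta> f) \<le> min_resid A \<beta> M C + t}"

definition theta_hat_min :: "('f::finite \<Rightarrow> nat \<Rightarrow> real) \<Rightarrow> ('f \<Rightarrow> real) \<Rightarrow> nat \<Rightarrow> real \<Rightarrow> real \<Rightarrow> real" where
  "theta_hat_min A \<beta> M C t = (INF w\<in>expanded_set A \<beta> M C t. objective A M w)"

definition theta_hat_max :: "('f::finite \<Rightarrow> nat \<Rightarrow> real) \<Rightarrow> ('f \<Rightarrow> real) \<Rightarrow> nat \<Rightarrow> real \<Rightarrow> real \<Rightarrow> real" where
  "theta_hat_max A \<beta> M C t = (SUP w\<in>expanded_set A \<beta> M C t. objective A M w)"

text \<open>Stochastic boundedness X_n = O_p(r_n), stated with outer probability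
  (for measurable X_n this is the usual definition).\<close>
definition bigOp :: "'a measure \<Rightarrow> (nat \<Rightarrow> 'a \<Rightarrow> real) \<Rightarrow> (nat \<Rightarrow> real) \<Rightarrow> bool" where
  "bigOp P X r \<longleftrightarrow> (\<forall>\<epsilon>>0. \<exists>K. \<exists>N. \<forall>n\<ge>N. \<exists>B\<in>sets P.
      {\<omega>\<in>space P. \<bar>X n \<omega>\<bar> > K * r n} \<subseteq> B \<and> measure P B < \<epsilon>)"

end

theory Submission
  imports Defs
begin


definition resv :: "('f::finite \<Rightarrow> nat \<Rightarrow> real) \<Rightarrow> ('f \<Rightarrow> real) \<Rightarrow> nat \<Rightarrow> (nat \<Rightarrow> real) \<Rightarrow> real^'f" where
  "resv A \<beta> M w = (\<chi> f. matvec A M w f - \<beta> f)"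

definition linf :: "(nat \<Rightarrow> real) \<Rightarrow> nat \<Rightarrow> (nat \<Rightarrow> real) \<Rightarrow> real" where
  "linf c M w = (\<Sum>y\<in>{1..M}. c y * w y)"

definition Phi :: "('f::finite \<Rightarrow> nat \<Rightarrow> real) \<Rightarrow> ('f \<Rightarrow> real) \<Rightarrow> (nat \<Rightarrow> real) \<Rightarrow> nat \<Rightarrow> (nat \<Rightarrow> real) \<Rightarrow> ((real^'f) \<times> real) \<times> real" where
  "Phi A \<beta> c M w = ((resv A \<beta> M w, linf c M w), 1)"

definition vert :: "real \<Rightarrow> nat set \<Rightarrow> nat \<Rightarrow> real" where
  "vert C S = (\<lambda>y. if y \<in> S then C else 0)"

lemma sum_aff:
  "(\<Sum>y\<in>S. a y * ((1-s) * u y + s * v y)) = ((1::real)-s)*(\<Sum>y\<in>S. a y * u y) + s*(\<Sum>y\<in>S. a y * v y)"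
proof -
  have "(\<Sum>y\<in>S. a y * ((1-s) * u y + s * v y)) = (\<Sum>y\<in>S. (1-s)*(a y * u y) + s*(a y * v y))"
    by (rule sum.cong) (auto simp: algebra_simps)
  also have "\<dots> = (1-s)*(\<Sum>y\<in>S. a y * u y) + s*(\<Sum>y\<in>S. a y * v y)"
    by (simp add: sum.distrib sum_distrib_left)
  finally show ?thesis .
qed

lemma Phi_affine:
  "Phi A \<beta> c M (\<lambda>y. (1 - s) * w1 y + s * w2 y) = (1 - s) *\<^sub>R Phi A \<beta> c M w1 + s *\<^sub>R Phi A \<beta> c M w2"
  unfolding Phi_def resv_def linf_def matvec_def
  by (simp only: sum_aff) (simp add: vec_eq_iff algebra_simps)

lemma vertex_hull:
  fixes A :: "'f::finite \<Rightarrow> nat \<Rightarrow> real"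
  assumes C: "C > 0" and w: "w \<in> box M C"
  shows "Phi A \<beta> c M w \<in> convex hull (Phi A \<beta> c M ` vert C ` Pow {1..M})"
proof -
  let ?H = "convex hull (Phi A \<beta> c M ` vert C ` Pow {1..M})"
  define valid where "valid m w \<longleftrightarrow> (\<forall>y\<in>{1..M}. 0 \<le> w y \<and> w y \<le> C) \<and> (\<forall>y. y \<notin> {1..M} \<longrightarrow> w y = 0)
      \<and> (\<forall>y\<in>{1..M}. y > m \<longrightarrow> w y = 0 \<or> w y = C)" for m and w :: "nat \<Rightarrow> real"
  have "\<forall>w. valid m w \<longrightarrow> Phi A \<beta> c M w \<in> ?H" for m
  proof (induction m)
    case 0
    show ?case
    proof (intro allI impI)
      fix w assume v: "valid 0 w"
      have "w = vert C {y\<in>{1..M}. w y = C}"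
      proof
        fix y show "w y = vert C {y \<in> {1..M}. w y = C} y"
          using v C unfolding valid_def vert_def by (cases "y \<in> {1..M}") auto
      qed
      then have "w \<in> vert C ` Pow {1..M}" by blast
      then show "Phi A \<beta> c M w \<in> ?H" by (intro hull_inc) blast
    qed
  next
    case (Suc m)
    show ?case
    proof (intro allI impI)
      fix w assume v: "valid (Suc m) w"
      show "Phi A \<beta> c M w \<in> ?H"
      proof (cases "Suc m \<in> {1..M}")
        case False
        then have "valid m w" using v unfolding valid_def
          by (metis Suc_lessI)
        then show ?thesis using Suc by blast
      next
        case True
        define w1 where "w1 = w(Suc m := 0)"
        define w2 where "w2 = w(Suc m := C)"
        define s where "s = w (Suc m) / C"
        have v1: "valid m w1" using v C True unfolding valid_def w1_def
          by (auto simp: less_Suc_eq)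
        have v2: "valid m w2" using v C True unfolding valid_def w2_def
          by (auto simp: less_Suc_eq)
        have s01: "0 \<le> s" "s \<le> 1" using v True C unfolding valid_def s_def by auto
        have "w = (\<lambda>y. (1 - s) * w1 y + s * w2 y)"
          using C by (intro ext) (auto simp: w1_def w2_def s_def field_simps)
        then have "Phi A \<beta> c M w = (1 - s) *\<^sub>R Phi A \<beta> c M w1 + s *\<^sub>R Phi A \<beta> c M w2"
          using Phi_affine by metis
        also have "\<dots> \<in> ?H"
          by (rule convexD[OF convex_convex_hull]) (use Suc v1 v2 s01 in auto)
        finally show ?thesis .
      qed
    qed
  qed
  moreover have "valid M w" using w unfolding valid_def box_def by auto
  ultimately show ?thesis by blast
qed

lemma norm_inf_ge: "\<bar>v f\<bar> \<le> norm_inf (v :: 'f::finite \<Rightarrow> real)"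
  unfolding norm_inf_def by (rule Max_ge) auto

lemma norm_inf_le: "(\<And>f. \<bar>v f\<bar> \<le> B) \<Longrightarrow> norm_inf (v :: 'f::finite \<Rightarrow> real) \<le> B"
  unfolding norm_inf_def by (rule Max.boundedI) auto

lemma norm_inf_nonneg: "0 \<le> norm_inf (v :: 'f::finite \<Rightarrow> real)"
  using norm_inf_ge[of v] abs_ge_zero order_trans by blast

lemma inner_triple: "((a1, a2), a3) \<bullet> ((r, z), t) = a1 \<bullet> r + a2 * z + a3 * (t::real)"
  by simp

lemma key:
  fixes A :: "'f::finite \<Rightarrow> nat \<Rightarrow> real"
  assumes C: "C > 0" and ne: "feasible_set A \<beta> M C \<noteq> {}"
  shows "\<exists>L\<ge>0. \<forall>w\<in>box M C. \<exists>v\<in>feasible_set A \<beta> M C.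
            linf c M v \<le> linf c M w + L * norm_inf (\<lambda>f. matvec A M w f - \<beta> f)"
proof -
  define V where "V = vert C ` Pow {1..M}"
  define G where "G = Phi A \<beta> c M ` V \<union> {((0,1),0)}"
  define K where "K = convex_cone hull G"
  define N :: "((real^'f) \<times> real) \<times> real \<Rightarrow> bool" where "N = (\<lambda>p. snd p \<ge> 0 \<and> (\<exists>u. (\<forall>y\<in>{1..M}. 0 \<le> u y \<and> u y \<le> snd p * C)
      \<and> fst (fst p) = (\<chi> f. matvec A M u f - snd p * \<beta> f) \<and> linf c M u \<le> snd (fst p)))"
  have finG: "finite G" unfolding G_def V_def by auto
  have polyK: "polyhedron K" unfolding K_def by (rule polyhedron_convex_cone_hull[OF finG])
  have mv_add: "matvec A M (\<lambda>y. u1 y + u2 y) f = matvec A M u1 f + matvec A M u2 f" for u1 u2 f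
    unfolding matvec_def by (simp add: sum.distrib distrib_left)
  have mv_scale: "matvec A M (\<lambda>y. k * u1 y) f = k * matvec A M u1 f" for u1 k f
    unfolding matvec_def by (simp add: sum_distrib_left algebra_simps)
  have lf_add: "linf c M (\<lambda>y. u1 y + u2 y) = linf c M u1 + linf c M u2" for u1 u2
    unfolding linf_def by (simp add: sum.distrib distrib_left)
  have lf_scale: "linf c M (\<lambda>y. k * u1 y) = k * linf c M u1" for u1 k
    unfolding linf_def by (simp add: sum_distrib_left algebra_simps)
  have ccN: "convex_cone (Collect N)"
    unfolding convex_cone_iff
  proof (intro conjI ballI allI impI)
    show "0 \<in> Collect N"
      unfolding N_def by (auto intro!: exI[of _ "\<lambda>_. 0"] simp: matvec_def linf_def vec_eq_iff)
  next
    fix p q assume x: "p \<in> Collect N" and y: "q \<in> Collect N"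
    obtain u1 where u1: "\<forall>y\<in>{1..M}. 0 \<le> u1 y \<and> u1 y \<le> snd p * C" "fst (fst p) = (\<chi> f. matvec A M u1 f - snd p * \<beta> f)" "linf c M u1 \<le> snd (fst p)"
      using x unfolding N_def by auto
    obtain u2 where u2: "\<forall>y\<in>{1..M}. 0 \<le> u2 y \<and> u2 y \<le> snd q * C" "fst (fst q) = (\<chi> f. matvec A M u2 f - snd q * \<beta> f)" "linf c M u2 \<le> snd (fst q)"
      using y unfolding N_def by auto
    show "p + q \<in> Collect N"
      unfolding N_def mem_Collect_eq
      using x y u1 u2 unfolding N_def
      by (auto intro!: exI[of _ "\<lambda>y. u1 y + u2 y"] simp: mv_add lf_add vec_eq_iff algebra_simps add_mono)
  next
    fix x and k :: real assume x: "x \<in> Collect N" and k: "0 \<le> k"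
    obtain u1 where u1: "\<forall>y\<in>{1..M}. 0 \<le> u1 y \<and> u1 y \<le> snd x * C" "fst (fst x) = (\<chi> f. matvec A M u1 f - snd x * \<beta> f)" "linf c M u1 \<le> snd (fst x)"
      using x unfolding N_def by auto
    have b1: "\<forall>y\<in>{1..M}. 0 \<le> k * u1 y \<and> k * u1 y \<le> (k * snd x) * C"
    proof
      fix y assume "y \<in> {1..M}"
      then have "0 \<le> u1 y" "u1 y \<le> snd x * C" using u1(1) by auto
      then show "0 \<le> k * u1 y \<and> k * u1 y \<le> (k * snd x) * C"
        using k mult_left_mono[of "u1 y" "snd x * C" k] by (simp add: mult.assoc)
    qed
    have b2: "k *\<^sub>R fst (fst x) = (\<chi> f. matvec A M (\<lambda>y. k * u1 y) f - (k * snd x) * \<beta> f)"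
      using u1(2) by (simp add: mv_scale vec_eq_iff algebra_simps) (metis distrib_left)
    have b3: "linf c M (\<lambda>y. k * u1 y) \<le> k * snd (fst x)" using u1(3) k by (simp add: lf_scale mult_left_mono)
    have sx: "snd x \<ge> 0" using x unfolding N_def by auto
    show "k *\<^sub>R x \<in> Collect N"
      unfolding N_def mem_Collect_eq
      using b1 b2 b3 k sx by (auto intro!: exI[of _ "\<lambda>y. k * u1 y"])
  qed
  have GN: "G \<subseteq> Collect N"
  proof
    fix g assume "g \<in> G"
    then consider "g = ((0,1),0)" | S where "S \<subseteq> {1..M}" "g = Phi A \<beta> c M (vert C S)"
      unfolding G_def V_def by auto
    then show "g \<in> Collect N"
    proof cases
      case 1 then show ?thesis
        unfolding N_def by (auto intro!: exI[of _ "\<lambda>_. 0"] simp: matvec_def linf_def vec_eq_iff)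
    next
      case 2 then show ?thesis
        unfolding N_def Phi_def resv_def using C
        by (auto intro!: exI[of _ "vert C S"] simp: vert_def)
    qed
  qed
  have KN: "K \<subseteq> Collect N"
    unfolding K_def by (rule hull_minimal[where S=convex_cone, OF GN ccN])
  have PhiK: "Phi A \<beta> c M w \<in> K" if "w \<in> box M C" for w
  proof -
    have "Phi A \<beta> c M w \<in> convex hull (Phi A \<beta> c M ` V)"
      unfolding V_def by (rule vertex_hull[OF C that])
    also have "\<dots> \<subseteq> convex hull G" unfolding G_def by (rule hull_mono) auto
    also have "\<dots> \<subseteq> K" unfolding K_def by (rule convex_hull_subset_convex_cone_hull)
    finally show ?thesis .
  qed
  have eK: "((0,1),0) \<in> K" unfolding K_def G_def by (rule hull_inc) auto
  obtain F where F: "finite F" "K = \<Inter>F" "\<forall>h\<in>F. \<exists>a b. a \<noteq> 0 \<and> h = {x. a \<bullet> x \<le> b}"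
    using polyK unfolding polyhedron_def by blast
  have "\<forall>h\<in>F. \<exists>ab. h = {x. fst ab \<bullet> x \<le> snd ab}" using F(3) by fastforce
  then obtain ab where ab: "\<forall>h\<in>F. h = {x. fst (ab h) \<bullet> x \<le> snd (ab h)}" by metis
  define ar where "ar h = fst (fst (fst (ab h)))" for h
  define az where "az h = snd (fst (fst (ab h)))" for h
  define atc where "atc h = snd (fst (ab h))" for h
  define bb where "bb h = snd (ab h)" for h
  have inner_eq: "fst (ab h) \<bullet> ((r, z), t) = ar h \<bullet> r + az h * z + atc h * t" for h r z t
  proof -
    have "fst (ab h) = ((ar h, az h), atc h)" unfolding ar_def az_def atc_def by simp
    then show ?thesis by simp
  qed
  have inK: "((r, z), t) \<in> K \<longleftrightarrow> (\<forall>h\<in>F. ar h \<bullet> r + az h * z + atc h * t \<le> bb h)" for r z t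
  proof -
    have mem: "x \<in> h \<longleftrightarrow> fst (ab h) \<bullet> x \<le> snd (ab h)" if "h \<in> F" for h x
    proof -
      have "h = {x. fst (ab h) \<bullet> x \<le> snd (ab h)}" using ab that by blast
      then have "(x \<in> h) = (x \<in> {x. fst (ab h) \<bullet> x \<le> snd (ab h)})" by (rule arg_cong)
      then show ?thesis by simp
    qed
    show ?thesis unfolding F(2) bb_def using mem by (auto simp: inner_eq)
  qed
  have az_le: "az h \<le> 0" if h: "h \<in> F" for h
  proof (rule ccontr)
    assume "\<not> az h \<le> 0"
    then have pos: "az h > 0" by simp
    define l where "l = (\<bar>bb h\<bar> + 1) / az h"
    have "l \<ge> 0" unfolding l_def using pos by simp
    then have "l *\<^sub>R ((0,1),0) \<in> K" using eK unfolding K_def by (rule convex_cone_hull_mul[rotated])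
    then have "((0, l), 0) \<in> K" by simp
    then have "az h * l \<le> bb h" using inK h by force
    moreover have "az h * l = \<bar>bb h\<bar> + 1" unfolding l_def using pos by simp
    ultimately show False by linarith
  qed
  obtain w0 where w0: "w0 \<in> feasible_set A \<beta> M C" using ne by blast
  have w0box: "w0 \<in> box M C" and w0eq: "matvec A M w0 = \<beta>" using w0 unfolding feasible_set_def by auto
  have "Phi A \<beta> c M w0 = ((0, linf c M w0), 1)"
    unfolding Phi_def resv_def using w0eq by (simp add: vec_eq_iff)
  then have w0K: "((0, linf c M w0), 1) \<in> K" using PhiK[OF w0box] by simp
  define L where "L = real CARD('f) * (\<Sum>h\<in>F. if az h < 0 then norm (ar h) / (- az h) else 0)"
  have terms_nn: "0 \<le> (if az h < 0 then norm (ar h) / (- az h) else 0)" for h by (auto simp: divide_nonneg_neg)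
  have L0: "L \<ge> 0" unfolding L_def by (intro mult_nonneg_nonneg sum_nonneg terms_nn) auto
  have Lbig: "real CARD('f) * norm (ar h) \<le> (- az h) * L" if "h \<in> F" "az h < 0" for h
  proof -
    have "norm (ar h) / (- az h) \<le> (\<Sum>h\<in>F. if az h < 0 then norm (ar h) / (- az h) else 0)"
      using member_le_sum[of h F "\<lambda>h. if az h < 0 then norm (ar h) / (- az h) else 0"] that F(1) terms_nn by auto
    then have "real CARD('f) * (norm (ar h) / (- az h)) \<le> L" unfolding L_def
      by (intro mult_left_mono) auto
    then show ?thesis using that(2) by (simp add: field_simps)
  qed
  show ?thesis
  proof (intro exI[of _ L] conjI L0 ballI)
    fix w assume w: "w \<in> box M C"
    define res where "res = norm_inf (\<lambda>f. matvec A M w f - \<beta> f)"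
    define R where "R = resv A \<beta> M w"
    have res0: "res \<ge> 0" unfolding res_def by (rule norm_inf_nonneg)
    have normR: "norm R \<le> real CARD('f) * res"
    proof -
      have "norm R \<le> (\<Sum>f\<in>UNIV. \<bar>R $ f\<bar>)" by (rule norm_le_l1_cart)
      also have "\<dots> \<le> (\<Sum>f\<in>(UNIV::'f set). res)"
        by (rule sum_mono) (simp add: R_def resv_def res_def norm_inf_ge[of "\<lambda>f. matvec A M w f - \<beta> f", simplified])
      also have "\<dots> = real CARD('f) * res" by simp
      finally show ?thesis .
    qed
    have wK: "((R, linf c M w), 1) \<in> K" using PhiK[OF w] unfolding Phi_def R_def by simp
    have qK: "((0, linf c M w + L * res), 1) \<in> K"
      unfolding inK
    proof
      fix h assume h: "h \<in> F"
      have hw: "ar h \<bullet> R + az h * linf c M w + atc h \<le> bb h" using wK h inK by force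
      have hw0: "az h * linf c M w0 + atc h \<le> bb h" using w0K h inK by force
      show "ar h \<bullet> 0 + az h * (linf c M w + L * res) + atc h * 1 \<le> bb h"
      proof (cases "az h < 0")
        case False
        then have "az h = 0" using az_le[OF h] by simp
        then show ?thesis using hw0 by simp
      next
        case True
        have "- (ar h \<bullet> R) \<le> norm (ar h) * norm R"
          using Cauchy_Schwarz_ineq2[of "ar h" R] by linarith
        also have "\<dots> \<le> norm (ar h) * (real CARD('f) * res)"
          by (rule mult_left_mono[OF normR]) simp
        also have "\<dots> = (real CARD('f) * norm (ar h)) * res" by simp
        also have "\<dots> \<le> ((- az h) * L) * res"
          by (rule mult_right_mono[OF Lbig[OF h True] res0])
        finally have "- (ar h \<bullet> R) \<le> - az h * L * res" .
        then show ?thesis using hw by (simp add: algebra_simps)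
      qed
    qed
    then have "((0, linf c M w + L * res), 1) \<in> Collect N" using KN by blast
    then obtain u where u: "\<forall>y\<in>{1..M}. 0 \<le> u y \<and> u y \<le> C" "(0::real^'f) = (\<chi> f. matvec A M u f - \<beta> f)"
        "linf c M u \<le> linf c M w + L * res"
      unfolding N_def by auto
    define v where "v y = (if y \<in> {1..M} then u y else 0)" for y
    have mvv: "matvec A M v = matvec A M u" unfolding matvec_def v_def by (intro ext sum.cong) auto
    have lvv: "linf c M v = linf c M u" unfolding linf_def v_def by (intro sum.cong) auto
    have "matvec A M u f = \<beta> f" for f using u(2) by (simp add: vec_eq_iff)
    then have "v \<in> feasible_set A \<beta> M C"
      unfolding feasible_set_def box_def using u(1) mvv by (auto simp: v_def)
    moreover have "linf c M v \<le> linf c M w + L * res" using u(3) lvv by simp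
    ultimately show "\<exists>v\<in>feasible_set A \<beta> M C. linf c M v \<le> linf c M w + L * norm_inf (\<lambda>f. matvec A M w f - \<beta> f)"
      unfolding res_def by blast
  qed
qed

lemma obj_lin:
  "objective A M w = (\<Sum>f\<in>UNIV. \<Sum>y\<in>{1..M}. A f y * real y) + linf (\<lambda>y. \<Sum>f\<in>UNIV. A f y * real y) M w"
proof -
  have "objective A M w = (\<Sum>f\<in>UNIV. \<Sum>y\<in>{1..M}. A f y * real y + A f y * real y * w y)"
    unfolding objective_def by (intro sum.cong refl) (simp add: algebra_simps)
  also have "\<dots> = (\<Sum>f\<in>UNIV. \<Sum>y\<in>{1..M}. A f y * real y) + (\<Sum>f\<in>UNIV. \<Sum>y\<in>{1..M}. A f y * real y * w y)"
    by (simp add: sum.distrib)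
  also have "(\<Sum>f\<in>UNIV. \<Sum>y\<in>{1..M}. A f y * real y * w y) = linf (\<lambda>y. \<Sum>f\<in>UNIV. A f y * real y) M w"
    unfolding linf_def by (subst sum.swap) (simp add: sum_distrib_right)
  finally show ?thesis .
qed

lemma keymin:
  fixes A :: "'f::finite \<Rightarrow> nat \<Rightarrow> real"
  assumes C: "C > 0" and ne: "feasible_set A \<beta> M C \<noteq> {}"
  shows "\<exists>L\<ge>0. \<forall>w\<in>box M C. \<exists>v\<in>feasible_set A \<beta> M C.
            objective A M v \<le> objective A M w + L * norm_inf (\<lambda>f. matvec A M w f - \<beta> f)"
  using key[OF C ne, of "\<lambda>y. \<Sum>f\<in>UNIV. A f y * real y"] unfolding obj_lin by auto

lemma keymax:
  fixes A :: "'f::finite \<Rightarrow> nat \<Rightarrow> real"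
  assumes C: "C > 0" and ne: "feasible_set A \<beta> M C \<noteq> {}"
  shows "\<exists>L\<ge>0. \<forall>w\<in>box M C. \<exists>v\<in>feasible_set A \<beta> M C.
            objective A M w - L * norm_inf (\<lambda>f. matvec A M w f - \<beta> f) \<le> objective A M v"
proof -
  have neg: "linf (\<lambda>y. - c y) M u = - linf c M u" for c u unfolding linf_def by (simp add: sum_negf)
  show ?thesis
    using key[OF C ne, of "\<lambda>y. - (\<Sum>f\<in>UNIV. A f y * real y)"] unfolding obj_lin neg by force
qed



lemma box_bounds: "w \<in> box M C \<Longrightarrow> y \<in> {1..M} \<Longrightarrow> 0 \<le> w y \<and> w y \<le> C"
  unfolding box_def by auto

lemma res_pert:
  fixes A Ah :: "'f \<Rightarrow> nat \<Rightarrow> real"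
  assumes w: "w \<in> box M C" and a: "\<forall>f. \<forall>y\<in>{1..M}. \<bar>Ah f y - A f y\<bar> \<le> a"
    and b: "\<forall>f. \<bar>bh f - \<beta> f\<bar> \<le> b"
  shows "\<bar>(matvec Ah M w f - bh f) - (matvec A M w f - \<beta> f)\<bar> \<le> real M * C * a + b"
proof -
  have "\<bar>matvec Ah M w f - matvec A M w f\<bar> = \<bar>\<Sum>y\<in>{1..M}. (Ah f y - A f y) * w y\<bar>"
    unfolding matvec_def by (simp add: sum_subtractf algebra_simps)
  also have "\<dots> \<le> (\<Sum>y\<in>{1..M}. \<bar>(Ah f y - A f y) * w y\<bar>)" by (rule sum_abs)
  also have "\<dots> \<le> (\<Sum>y\<in>{1..M}. a * C)"
  proof (rule sum_mono)
    fix y assume y: "y \<in> {1..M}"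
    have a0: "0 \<le> a" using a y by (meson abs_ge_zero order_trans)
    have "\<bar>(Ah f y - A f y) * w y\<bar> = \<bar>Ah f y - A f y\<bar> * w y" using box_bounds[OF w y] by (simp add: abs_mult)
    also have "\<dots> \<le> a * C" using box_bounds[OF w y] a y a0 by (intro mult_mono) auto
    finally show "\<bar>(Ah f y - A f y) * w y\<bar> \<le> a * C" .
  qed
  also have "\<dots> = real M * C * a" by simp
  finally have 1: "\<bar>matvec Ah M w f - matvec A M w f\<bar> \<le> real M * C * a" .
  show ?thesis using 1 b[rule_format, of f] by linarith
qed

lemma norm_inf_pert:
  fixes u v :: "'f::finite \<Rightarrow> real"
  assumes "\<And>f. \<bar>u f - v f\<bar> \<le> e"
  shows "norm_inf u \<le> norm_inf v + e"
proof (rule norm_inf_le)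
  fix f have "\<bar>v f\<bar> \<le> norm_inf v" by (rule norm_inf_ge)
  then show "\<bar>u f\<bar> \<le> norm_inf v + e" using assms[of f] by linarith
qed

lemma term_bound:
  fixes d q :: real and y :: nat
  assumes "\<bar>d\<bar> \<le> a" "y \<le> M" "0 \<le> q" "q \<le> C + 1"
  shows "\<bar>d * real y * q\<bar> \<le> a * real M * (C + 1)"
proof -
  have "\<bar>d * real y * q\<bar> = \<bar>d\<bar> * real y * q" using assms by (simp add: abs_mult)
  also have "\<dots> \<le> a * real M * (C + 1)"
    using assms by (intro mult_mono) auto
  finally show ?thesis .
qed

lemma obj_pert:
  fixes A Ah :: "'f::finite \<Rightarrow> nat \<Rightarrow> real"
  assumes w: "w \<in> box M C" and a: "\<forall>f. \<forall>y\<in>{1..M}. \<bar>Ah f y - A f y\<bar> \<le> a"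
  shows "\<bar>objective Ah M w - objective A M w\<bar> \<le> real CARD('f) * real M * real M * (C + 1) * a"
proof -
  have "\<bar>objective Ah M w - objective A M w\<bar> = \<bar>\<Sum>f\<in>UNIV. \<Sum>y\<in>{1..M}. (Ah f y - A f y) * real y * (w y + 1)\<bar>"
    unfolding objective_def by (simp add: sum_subtractf[symmetric] algebra_simps)
  also have "\<dots> \<le> (\<Sum>f\<in>UNIV. \<bar>\<Sum>y\<in>{1..M}. (Ah f y - A f y) * real y * (w y + 1)\<bar>)" by (rule sum_abs)
  also have "\<dots> \<le> (\<Sum>f\<in>(UNIV::'f set). \<Sum>y\<in>{1..M}. a * real M * (C + 1))"
  proof (rule sum_mono)
    fix f
    have "\<bar>\<Sum>y\<in>{1..M}. (Ah f y - A f y) * real y * (w y + 1)\<bar> \<le> (\<Sum>y\<in>{1..M}. \<bar>(Ah f y - A f y) * real y * (w y + 1)\<bar>)"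
      by (rule sum_abs)
    also have "\<dots> \<le> (\<Sum>y\<in>{1..M}. a * real M * (C + 1))"
      by (rule sum_mono, rule term_bound) (use a box_bounds[OF w] in auto)
    finally show "\<bar>\<Sum>y\<in>{1..M}. (Ah f y - A f y) * real y * (w y + 1)\<bar> \<le> (\<Sum>y\<in>{1..M}. a * real M * (C + 1))" .
  qed
  also have "\<dots> = real CARD('f) * real M * real M * (C + 1) * a" by (simp add: algebra_simps)
  finally show ?thesis .
qed

lemma obj_bounds:
  fixes A :: "'f::finite \<Rightarrow> nat \<Rightarrow> real"
  assumes w: "w \<in> box M C" and A: "\<And>f y. y \<in> {1..M} \<Longrightarrow> 0 \<le> A f y \<and> A f y \<le> 1"
  shows "0 \<le> objective A M w" "objective A M w \<le> real CARD('f) * real M * real M * (C + 1)"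
proof -
  show "0 \<le> objective A M w" unfolding objective_def
    using A box_bounds[OF w] by (intro sum_nonneg mult_nonneg_nonneg) auto
  have "objective A M w \<le> (\<Sum>f\<in>(UNIV::'f set). \<Sum>y\<in>{1..M}. 1 * real M * (C + 1))"
    unfolding objective_def
  proof (intro sum_mono)
    fix f y assume y: "y \<in> {1..M}"
    have "A f y * real y * (w y + 1) \<le> \<bar>(A f y) * real y * (w y + 1)\<bar>" by simp
    also have "\<dots> \<le> 1 * real M * (C + 1)" using A[OF y] box_bounds[OF w y] y by (intro term_bound) auto
    finally show "A f y * real y * (w y + 1) \<le> 1 * real M * (C + 1)" .
  qed
  also have "\<dots> = real CARD('f) * real M * real M * (C + 1)" by simp
  finally show "objective A M w \<le> real CARD('f) * real M * real M * (C + 1)" .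
qed

lemma box_ne: "(\<lambda>_. 0) \<in> box M C" if "C \<ge> 0" using that unfolding box_def by auto

lemma min_resid_facts:
  fixes A :: "'f::finite \<Rightarrow> nat \<Rightarrow> real"
  assumes "C \<ge> 0"
  shows "0 \<le> min_resid A \<beta> M C"
    "w \<in> box M C \<Longrightarrow> min_resid A \<beta> M C \<le> norm_inf (\<lambda>f. matvec A M w f - \<beta> f)"
proof -
  have ne: "box M C \<noteq> {}" using box_ne[OF assms] by blast
  show "0 \<le> min_resid A \<beta> M C" unfolding min_resid_def
    by (rule cINF_greatest[OF ne]) (rule norm_inf_nonneg)
  show "w \<in> box M C \<Longrightarrow> min_resid A \<beta> M C \<le> norm_inf (\<lambda>f. matvec A M w f - \<beta> f)"
    unfolding min_resid_def
    by (rule cINF_lower) (auto intro!: bdd_belowI[of _ 0] norm_inf_nonneg)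
qed

lemma det_min:
  fixes A Ah :: "'f::finite \<Rightarrow> nat \<Rightarrow> real"
  assumes C: "C > 0" and Ab: "\<And>f y. y \<in> {1..M} \<Longrightarrow> 0 \<le> A f y \<and> A f y \<le> 1"
    and ne: "feasible_set A \<beta> M C \<noteq> {}" and L0: "L \<ge> 0"
    and KL: "\<forall>w\<in>box M C. \<exists>v\<in>feasible_set A \<beta> M C. objective A M v \<le> objective A M w + L * norm_inf (\<lambda>f. matvec A M w f - \<beta> f)"
    and a: "\<forall>f. \<forall>y\<in>{1..M}. \<bar>Ah f y - A f y\<bar> \<le> a" and a0: "a \<ge> 0"
    and b: "\<forall>f. \<bar>bh f - \<beta> f\<bar> \<le> b" and et: "real M * C * a + b \<le> t"
  shows "\<bar>theta_hat_min Ah bh M C t - theta_min A \<beta> M C\<bar> \<le> (real CARD('f) * real M * (C + 1) / C + 3 * L) * t"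
proof -
  define e where "e = real M * C * a + b"
  define e' where "e' = real CARD('f) * real M * real M * (C + 1) * a"
  have b0: "b \<ge> 0" using b by (meson abs_ge_zero order_trans)
  have Ca: "real M * C * a \<le> t" using et b0 by linarith
  have e'le: "e' \<le> real CARD('f) * real M * (C + 1) / C * t"
  proof -
    have "e' = real CARD('f) * real M * (C + 1) / C * (real M * C * a)"
      unfolding e'_def using C by (simp add: field_simps)
    also have "\<dots> \<le> real CARD('f) * real M * (C + 1) / C * t"
      using C Ca by (intro mult_left_mono) auto
    finally show ?thesis .
  qed
  have et': "e \<le> t" using et unfolding e_def .
  have F0Exp: "v \<in> expanded_set Ah bh M C t" if v: "v \<in> feasible_set A \<beta> M C" for v
  proof -
    have vbox: "v \<in> box M C" and veq: "matvec A M v = \<beta>" using v unfolding feasible_set_def by auto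
    have "norm_inf (\<lambda>f. matvec Ah M v f - bh f) \<le> e"
    proof (rule norm_inf_le)
      fix f show "\<bar>matvec Ah M v f - bh f\<bar> \<le> e"
        using res_pert[OF vbox a b, of f] veq unfolding e_def by simp
    qed
    also have "\<dots> \<le> min_resid Ah bh M C + t" using et' min_resid_facts(1)[of C Ah bh M] C by simp
    finally show ?thesis unfolding expanded_set_def using vbox by simp
  qed
  have Exp_ne: "expanded_set Ah bh M C t \<noteq> {}" using ne F0Exp by blast
  have Expbox: "w \<in> box M C" if "w \<in> expanded_set Ah bh M C t" for w
    using that unfolding expanded_set_def by simp
  obtain w0 where w0: "w0 \<in> feasible_set A \<beta> M C" using ne by blast
  have w0box: "w0 \<in> box M C" and w0eq: "matvec A M w0 = \<beta>" using w0 unfolding feasible_set_def by auto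
  have resw0: "norm_inf (\<lambda>f. matvec Ah M w0 f - bh f) \<le> e"
  proof (rule norm_inf_le)
    fix f show "\<bar>matvec Ah M w0 f - bh f\<bar> \<le> e"
      using res_pert[OF w0box a b, of f] w0eq unfolding e_def by simp
  qed
  have resExp: "norm_inf (\<lambda>f. matvec A M w f - \<beta> f) \<le> 3 * t" if w: "w \<in> expanded_set Ah bh M C t" for w
  proof -
    have wb: "w \<in> box M C" using Expbox[OF w] .
    have "norm_inf (\<lambda>f. matvec A M w f - \<beta> f) \<le> norm_inf (\<lambda>f. matvec Ah M w f - bh f) + e"
      by (rule norm_inf_pert) (use res_pert[OF wb a b] in \<open>auto simp: e_def abs_minus_commute\<close>)
    also have "norm_inf (\<lambda>f. matvec Ah M w f - bh f) \<le> min_resid Ah bh M C + t"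
      using w unfolding expanded_set_def by simp
    also have "min_resid Ah bh M C \<le> norm_inf (\<lambda>f. matvec Ah M w0 f - bh f)"
      using min_resid_facts(2)[OF _ w0box] C by simp
    finally show ?thesis using resw0 et' by linarith
  qed
  have opert: "\<bar>objective Ah M w - objective A M w\<bar> \<le> e'" if "w \<in> box M C" for w
    using obj_pert[OF that a] unfolding e'_def .
  have ob: "0 \<le> objective A M w" "objective A M w \<le> real CARD('f) * real M * real M * (C + 1)" if "w \<in> box M C" for w
    using obj_bounds[OF that Ab] by auto
  have up: "theta_hat_min Ah bh M C t - e' \<le> theta_min A \<beta> M C"
    unfolding theta_min_def
  proof (rule cINF_greatest[OF ne])
    fix v assume v: "v \<in> feasible_set A \<beta> M C"
    have vb: "v \<in> box M C" using v unfolding feasible_set_def by simp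
    have "theta_hat_min Ah bh M C t \<le> objective Ah M v"
      unfolding theta_hat_min_def
      by (rule cINF_lower[OF _ F0Exp[OF v]]) (rule bdd_belowI[of _ "- e'"], use opert ob Expbox in \<open>force\<close>)
    then show "theta_hat_min Ah bh M C t - e' \<le> objective A M v" using opert[OF vb] by linarith
  qed
  have lo: "theta_min A \<beta> M C - e' - 3 * L * t \<le> theta_hat_min Ah bh M C t"
    unfolding theta_hat_min_def
  proof (rule cINF_greatest[OF Exp_ne])
    fix w assume w: "w \<in> expanded_set Ah bh M C t"
    have wb: "w \<in> box M C" using Expbox[OF w] .
    obtain v where v: "v \<in> feasible_set A \<beta> M C"
      "objective A M v \<le> objective A M w + L * norm_inf (\<lambda>f. matvec A M w f - \<beta> f)"
      using KL wb by blast
    have vb: "v \<in> box M C" using v unfolding feasible_set_def by simp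
    have "theta_min A \<beta> M C \<le> objective A M v" unfolding theta_min_def
      by (rule cINF_lower[OF _ v(1)]) (rule bdd_belowI[of _ 0], use ob feasible_set_def in \<open>force\<close>)
    moreover have "L * norm_inf (\<lambda>f. matvec A M w f - \<beta> f) \<le> L * (3 * t)"
      by (rule mult_left_mono[OF resExp[OF w] L0])
    ultimately show "theta_min A \<beta> M C - e' - 3 * L * t \<le> objective Ah M w"
      using v(2) opert[OF wb] by linarith
  qed
  have t0: "t \<ge> 0" using et a0 b0 C by (smt (verit) mult_nonneg_nonneg of_nat_0_le_iff)
  have Lt: "3 * L * t \<ge> 0" using L0 t0 by simp
  show ?thesis using up lo e'le Lt by (simp only: abs_le_iff distrib_right) linarith
qed

lemma det_max:
  fixes A Ah :: "'f::finite \<Rightarrow> nat \<Rightarrow> real"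
  assumes C: "C > 0" and Ab: "\<And>f y. y \<in> {1..M} \<Longrightarrow> 0 \<le> A f y \<and> A f y \<le> 1"
    and ne: "feasible_set A \<beta> M C \<noteq> {}" and L0: "L \<ge> 0"
    and KL: "\<forall>w\<in>box M C. \<exists>v\<in>feasible_set A \<beta> M C. objective A M w - L * norm_inf (\<lambda>f. matvec A M w f - \<beta> f) \<le> objective A M v"
    and a: "\<forall>f. \<forall>y\<in>{1..M}. \<bar>Ah f y - A f y\<bar> \<le> a" and a0: "a \<ge> 0"
    and b: "\<forall>f. \<bar>bh f - \<beta> f\<bar> \<le> b" and et: "real M * C * a + b \<le> t"
  shows "\<bar>theta_hat_max Ah bh M C t - theta_max A \<beta> M C\<bar> \<le> (real CARD('f) * real M * (C + 1) / C + 3 * L) * t"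
proof -
  define e where "e = real M * C * a + b"
  define e' where "e' = real CARD('f) * real M * real M * (C + 1) * a"
  have b0: "b \<ge> 0" using b by (meson abs_ge_zero order_trans)
  have Ca: "real M * C * a \<le> t" using et b0 by linarith
  have e'le: "e' \<le> real CARD('f) * real M * (C + 1) / C * t"
  proof -
    have "e' = real CARD('f) * real M * (C + 1) / C * (real M * C * a)"
      unfolding e'_def using C by (simp add: field_simps)
    also have "\<dots> \<le> real CARD('f) * real M * (C + 1) / C * t"
      using C Ca by (intro mult_left_mono) auto
    finally show ?thesis .
  qed
  have et': "e \<le> t" using et unfolding e_def .
  have F0Exp: "v \<in> expanded_set Ah bh M C t" if v: "v \<in> feasible_set A \<beta> M C" for v
  proof -
    have vbox: "v \<in> box M C" and veq: "matvec A M v = \<beta>" using v unfolding feasible_set_def by auto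
    have "norm_inf (\<lambda>f. matvec Ah M v f - bh f) \<le> e"
    proof (rule norm_inf_le)
      fix f show "\<bar>matvec Ah M v f - bh f\<bar> \<le> e"
        using res_pert[OF vbox a b, of f] veq unfolding e_def by simp
    qed
    also have "\<dots> \<le> min_resid Ah bh M C + t" using et' min_resid_facts(1)[of C Ah bh M] C by simp
    finally show ?thesis unfolding expanded_set_def using vbox by simp
  qed
  have Exp_ne: "expanded_set Ah bh M C t \<noteq> {}" using ne F0Exp by blast
  have Expbox: "w \<in> box M C" if "w \<in> expanded_set Ah bh M C t" for w
    using that unfolding expanded_set_def by simp
  obtain w0 where w0: "w0 \<in> feasible_set A \<beta> M C" using ne by blast
  have w0box: "w0 \<in> box M C" and w0eq: "matvec A M w0 = \<beta>" using w0 unfolding feasible_set_def by auto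
  have resw0: "norm_inf (\<lambda>f. matvec Ah M w0 f - bh f) \<le> e"
  proof (rule norm_inf_le)
    fix f show "\<bar>matvec Ah M w0 f - bh f\<bar> \<le> e"
      using res_pert[OF w0box a b, of f] w0eq unfolding e_def by simp
  qed
  have resExp: "norm_inf (\<lambda>f. matvec A M w f - \<beta> f) \<le> 3 * t" if w: "w \<in> expanded_set Ah bh M C t" for w
  proof -
    have wb: "w \<in> box M C" using Expbox[OF w] .
    have "norm_inf (\<lambda>f. matvec A M w f - \<beta> f) \<le> norm_inf (\<lambda>f. matvec Ah M w f - bh f) + e"
      by (rule norm_inf_pert) (use res_pert[OF wb a b] in \<open>auto simp: e_def abs_minus_commute\<close>)
    also have "norm_inf (\<lambda>f. matvec Ah M w f - bh f) \<le> min_resid Ah bh M C + t"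
      using w unfolding expanded_set_def by simp
    also have "min_resid Ah bh M C \<le> norm_inf (\<lambda>f. matvec Ah M w0 f - bh f)"
      using min_resid_facts(2)[OF _ w0box] C by simp
    finally show ?thesis using resw0 et' by linarith
  qed
  have opert: "\<bar>objective Ah M w - objective A M w\<bar> \<le> e'" if "w \<in> box M C" for w
    using obj_pert[OF that a] unfolding e'_def .
  have ob: "0 \<le> objective A M w" "objective A M w \<le> real CARD('f) * real M * real M * (C + 1)" if "w \<in> box M C" for w
    using obj_bounds[OF that Ab] by auto
  have lo: "theta_max A \<beta> M C \<le> theta_hat_max Ah bh M C t + e'"
    unfolding theta_max_def
  proof (rule cSUP_least[OF ne])
    fix v assume v: "v \<in> feasible_set A \<beta> M C"
    have vb: "v \<in> box M C" using v unfolding feasible_set_def by simp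
    have "objective Ah M v \<le> theta_hat_max Ah bh M C t"
      unfolding theta_hat_max_def
      by (rule cSUP_upper[OF F0Exp[OF v]]) (rule bdd_aboveI[of _ "real CARD('f) * real M * real M * (C + 1) + e'"], use opert ob Expbox in \<open>force\<close>)
    then show "objective A M v \<le> theta_hat_max Ah bh M C t + e'" using opert[OF vb] by linarith
  qed
  have up: "theta_hat_max Ah bh M C t \<le> theta_max A \<beta> M C + e' + 3 * L * t"
    unfolding theta_hat_max_def
  proof (rule cSUP_least[OF Exp_ne])
    fix w assume w: "w \<in> expanded_set Ah bh M C t"
    have wb: "w \<in> box M C" using Expbox[OF w] .
    obtain v where v: "v \<in> feasible_set A \<beta> M C"
      "objective A M w - L * norm_inf (\<lambda>f. matvec A M w f - \<beta> f) \<le> objective A M v"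
      using KL wb by blast
    have vb: "v \<in> box M C" using v unfolding feasible_set_def by simp
    have "objective A M v \<le> theta_max A \<beta> M C" unfolding theta_max_def
      by (rule cSUP_upper[OF v(1)]) (rule bdd_aboveI[of _ "real CARD('f) * real M * real M * (C + 1)"], use ob feasible_set_def in \<open>force\<close>)
    moreover have "L * norm_inf (\<lambda>f. matvec A M w f - \<beta> f) \<le> L * (3 * t)"
      by (rule mult_left_mono[OF resExp[OF w] L0])
    ultimately show "objective Ah M w \<le> theta_max A \<beta> M C + e' + 3 * L * t"
      using v(2) opert[OF wb] by linarith
  qed
  have t0: "t \<ge> 0" using et a0 b0 C by (smt (verit) mult_nonneg_nonneg of_nat_0_le_iff)
  have Lt: "3 * L * t \<ge> 0" using L0 t0 by simp
  show ?thesis using up lo e'le Lt by (simp only: abs_le_iff distrib_right) linarith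
qed



lemma bigOp_transfer:
  fixes P :: "'a measure" and X Y Z :: "nat \<Rightarrow> 'a \<Rightarrow> real"
  assumes bX: "bigOp P X (\<lambda>n. 1 / sqrt (real n))" and bY: "bigOp P Y (\<lambda>n. 1 / sqrt (real n))"
    and kap: "filterlim \<kappa> at_top sequentially" and c1: "c1 \<ge> 0"
    and det: "\<And>n \<omega>. n \<ge> 1 \<Longrightarrow> \<omega> \<in> space P \<Longrightarrow> c1 * X n \<omega> + Y n \<omega> \<le> \<kappa> n / sqrt (real n)
        \<Longrightarrow> \<bar>Z n \<omega>\<bar> \<le> K * (\<kappa> n / sqrt (real n))"
  shows "bigOp P Z (\<lambda>n. \<kappa> n / sqrt (real n))"
  unfolding bigOp_def
proof (intro allI impI)
  fix \<epsilon> :: real assume e: "\<epsilon> > 0"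
  obtain Kx Nx where X: "\<forall>n\<ge>Nx. \<exists>B\<in>sets P. {\<omega>\<in>space P. \<bar>X n \<omega>\<bar> > Kx * (1 / sqrt (real n))} \<subseteq> B \<and> measure P B < \<epsilon> / 2"
    using bX e unfolding bigOp_def by (meson half_gt_zero)
  obtain Ky Ny where Y: "\<forall>n\<ge>Ny. \<exists>B\<in>sets P. {\<omega>\<in>space P. \<bar>Y n \<omega>\<bar> > Ky * (1 / sqrt (real n))} \<subseteq> B \<and> measure P B < \<epsilon> / 2"
    using bY e unfolding bigOp_def by (meson half_gt_zero)
  have "eventually (\<lambda>n. c1 * \<bar>Kx\<bar> + \<bar>Ky\<bar> \<le> \<kappa> n) sequentially"
    using kap unfolding filterlim_at_top by blast
  then obtain Nk where Nk: "\<forall>n\<ge>Nk. c1 * \<bar>Kx\<bar> + \<bar>Ky\<bar> \<le> \<kappa> n"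
    unfolding eventually_sequentially by blast
  show "\<exists>K N. \<forall>n\<ge>N. \<exists>B\<in>sets P. {\<omega> \<in> space P. K * (\<kappa> n / sqrt (real n)) < \<bar>Z n \<omega>\<bar>} \<subseteq> B \<and> measure P B < \<epsilon>"
  proof (intro exI[of _ K] exI[of _ "max (max Nx Ny) (max Nk 1)"] allI impI)
    fix n assume n: "max (max Nx Ny) (max Nk 1) \<le> n"
    obtain Bx where Bx: "Bx \<in> sets P" "{\<omega>\<in>space P. \<bar>X n \<omega>\<bar> > Kx * (1 / sqrt (real n))} \<subseteq> Bx" "measure P Bx < \<epsilon> / 2"
      using X n by auto
    obtain By where By: "By \<in> sets P" "{\<omega>\<in>space P. \<bar>Y n \<omega>\<bar> > Ky * (1 / sqrt (real n))} \<subseteq> By" "measure P By < \<epsilon> / 2"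
      using Y n by auto
    have n1: "n \<ge> 1" using n by simp
    define s where "s = sqrt (real n)"
    have s0: "s > 0" unfolding s_def using n1 by simp
    have "{\<omega> \<in> space P. K * (\<kappa> n / sqrt (real n)) < \<bar>Z n \<omega>\<bar>} \<subseteq> Bx \<union> By"
    proof
      fix \<omega> assume w: "\<omega> \<in> {\<omega> \<in> space P. K * (\<kappa> n / sqrt (real n)) < \<bar>Z n \<omega>\<bar>}"
      show "\<omega> \<in> Bx \<union> By"
      proof (rule ccontr)
        assume "\<omega> \<notin> Bx \<union> By"
        then have "\<bar>X n \<omega>\<bar> \<le> Kx * (1 / s)" "\<bar>Y n \<omega>\<bar> \<le> Ky * (1 / s)"
          using Bx(2) By(2) w unfolding s_def by force+
        then have hx: "\<bar>X n \<omega>\<bar> \<le> \<bar>Kx\<bar> / s" and hy: "\<bar>Y n \<omega>\<bar> \<le> \<bar>Ky\<bar> / s"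
          using s0 by (auto simp: divide_right_mono order_trans[OF _ divide_right_mono[OF abs_ge_self]])
        have "c1 * X n \<omega> \<le> c1 * (\<bar>Kx\<bar> / s)"
          using mult_left_mono[OF hx c1] c1 by (smt (verit) abs_ge_self mult_left_mono)
        then have "c1 * X n \<omega> + Y n \<omega> \<le> (c1 * \<bar>Kx\<bar> + \<bar>Ky\<bar>) / s"
          using hy by (simp add: add_divide_distrib)
        also have "\<dots> \<le> \<kappa> n / s" using Nk n s0 by (intro divide_right_mono) auto
        finally have "\<bar>Z n \<omega>\<bar> \<le> K * (\<kappa> n / sqrt (real n))"
          using det[OF n1] w unfolding s_def by auto
        then show False using w by auto
      qed
    qed
    moreover have "Bx \<union> By \<in> sets P" using Bx By by auto
    moreover have "measure P (Bx \<union> By) < \<epsilon>"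
      using measure_Un_le[OF Bx(1) By(1)] Bx(3) By(3) by linarith
    ultimately show "\<exists>B\<in>sets P. {\<omega> \<in> space P. K * (\<kappa> n / sqrt (real n)) < \<bar>Z n \<omega>\<bar>} \<subseteq> B \<and> measure P B < \<epsilon>"
      by blast
  qed
qed

theorem theorem2:
  fixes P :: "'a measure"
    and M :: nat and C :: real
    and A :: "'f::finite \<Rightarrow> nat \<Rightarrow> real" and \<beta> :: "'f \<Rightarrow> real"
    and Ahat :: "nat \<Rightarrow> 'a \<Rightarrow> 'f \<Rightarrow> nat \<Rightarrow> real"
    and \<beta>hat :: "nat \<Rightarrow> 'a \<Rightarrow> 'f \<Rightarrow> real"
    and \<kappa> :: "nat \<Rightarrow> real"
  assumes "prob_space P"
    and "M \<ge> 1" and "C > 0"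
    and "\<And>f y. y \<in> {1..M} \<Longrightarrow> 0 \<le> A f y \<and> A f y \<le> 1"
    and "\<And>f. 0 \<le> \<beta> f \<and> \<beta> f \<le> 1"
    and "feasible_set A \<beta> M C \<noteq> {}"
    and "\<And>n f y. (\<lambda>\<omega>. Ahat n \<omega> f y) \<in> borel_measurable P"
    and "\<And>n f. (\<lambda>\<omega>. \<beta>hat n \<omega> f) \<in> borel_measurable P"
    and "bigOp P (\<lambda>n \<omega>. Max {\<bar>Ahat n \<omega> f y - A f y\<bar> | f y. y \<in> {1..M}})
                 (\<lambda>n. 1 / sqrt (real n))"
    and "bigOp P (\<lambda>n \<omega>. Max (range (\<lambda>f. \<bar>\<beta>hat n \<omega> f - \<beta> f\<bar>)))
                 (\<lambda>n. 1 / sqrt (real n))"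
    and "\<And>n. \<kappa> n > 0"
    and "filterlim \<kappa> at_top sequentially"
    and "(\<lambda>n. \<kappa> n / sqrt (real n)) \<longlonglongrightarrow> 0"
  shows "bigOp P (\<lambda>n \<omega>. theta_hat_min (Ahat n \<omega>) (\<beta>hat n \<omega>) M C (\<kappa> n / sqrt (real n))
                        - theta_min A \<beta> M C) (\<lambda>n. \<kappa> n / sqrt (real n))
       \<and> bigOp P (\<lambda>n \<omega>. theta_hat_max (Ahat n \<omega>) (\<beta>hat n \<omega>) M C (\<kappa> n / sqrt (real n))
                        - theta_max A \<beta> M C) (\<lambda>n. \<kappa> n / sqrt (real n))"
proof -
  note as = assms
  have C: "C > 0" and M: "M \<ge> 1" using as by auto
  have Ab: "\<And>f y. y \<in> {1..M} \<Longrightarrow> 0 \<le> A f y \<and> A f y \<le> 1" using as(4) by blast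
  have ne: "feasible_set A \<beta> M C \<noteq> {}" using as(6) .
  obtain L1 where L1: "L1 \<ge> 0" "\<forall>w\<in>box M C. \<exists>v\<in>feasible_set A \<beta> M C.
            objective A M v \<le> objective A M w + L1 * norm_inf (\<lambda>f. matvec A M w f - \<beta> f)"
    using keymin[OF C ne] by blast
  obtain L2 where L2: "L2 \<ge> 0" "\<forall>w\<in>box M C. \<exists>v\<in>feasible_set A \<beta> M C.
            objective A M w - L2 * norm_inf (\<lambda>f. matvec A M w f - \<beta> f) \<le> objective A M v"
    using keymax[OF C ne] by blast
  define am where "am n \<omega> = Max {\<bar>Ahat n \<omega> f y - A f y\<bar> | f y. y \<in> {1..M}}" for n \<omega>
  define bm where "bm n \<omega> = Max (range (\<lambda>f. \<bar>\<beta>hat n \<omega> f - \<beta> f\<bar>))" for n \<omega>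
  have fin: "finite {\<bar>Ahat n \<omega> f y - A f y\<bar> | f y. y \<in> {1..M}}" for n \<omega>
  proof -
    have "{\<bar>Ahat n \<omega> f y - A f y\<bar> | f y. y \<in> {1..M}} = (\<lambda>(f, y). \<bar>Ahat n \<omega> f y - A f y\<bar>) ` (UNIV \<times> {1..M})"
      by fastforce
    then show ?thesis by simp
  qed
  have ama: "\<forall>f. \<forall>y\<in>{1..M}. \<bar>Ahat n \<omega> f y - A f y\<bar> \<le> am n \<omega>" for n \<omega>
  proof (intro allI ballI)
    fix f y assume y: "y \<in> {1..M}"
    have "\<bar>Ahat n \<omega> f y - A f y\<bar> \<in> {\<bar>Ahat n \<omega> f y - A f y\<bar> | f y. y \<in> {1..M}}" using y by blast
    then show "\<bar>Ahat n \<omega> f y - A f y\<bar> \<le> am n \<omega>" unfolding am_def using fin by (intro Max_ge)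
  qed
  have am0: "am n \<omega> \<ge> 0" for n \<omega>
  proof -
    have "1 \<in> {1..M}" using M by simp
    then show ?thesis using ama[of n \<omega>] by (meson abs_ge_zero order_trans)
  qed
  have bmb: "\<forall>f. \<bar>\<beta>hat n \<omega> f - \<beta> f\<bar> \<le> bm n \<omega>" for n \<omega>
    unfolding bm_def by (auto intro!: Max_ge)
  have c1: "real M * C \<ge> 0" using C by simp
  have bA: "bigOp P am (\<lambda>n. 1 / sqrt (real n))" using as(9) unfolding am_def .
  have bB: "bigOp P bm (\<lambda>n. 1 / sqrt (real n))" using as(10) unfolding bm_def .
  show ?thesis
  proof
    show "bigOp P (\<lambda>n \<omega>. theta_hat_min (Ahat n \<omega>) (\<beta>hat n \<omega>) M C (\<kappa> n / sqrt (real n))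
                        - theta_min A \<beta> M C) (\<lambda>n. \<kappa> n / sqrt (real n))"
    proof (rule bigOp_transfer[OF bA bB as(12) c1])
      fix n \<omega> assume "real M * C * am n \<omega> + bm n \<omega> \<le> \<kappa> n / sqrt (real n)"
      then show "\<bar>theta_hat_min (Ahat n \<omega>) (\<beta>hat n \<omega>) M C (\<kappa> n / sqrt (real n)) - theta_min A \<beta> M C\<bar>
          \<le> (real CARD('f) * real M * (C + 1) / C + 3 * L1) * (\<kappa> n / sqrt (real n))"
        by (intro det_min[OF C Ab ne L1(1) L1(2) ama am0 bmb]) auto
    qed
    show "bigOp P (\<lambda>n \<omega>. theta_hat_max (Ahat n \<omega>) (\<beta>hat n \<omega>) M C (\<kappa> n / sqrt (real n))
                        - theta_max A \<beta> M C) (\<lambda>n. \<kappa> n / sqrt (real n))"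
    proof (rule bigOp_transfer[OF bA bB as(12) c1])
      fix n \<omega> assume "real M * C * am n \<omega> + bm n \<omega> \<le> \<kappa> n / sqrt (real n)"
      then show "\<bar>theta_hat_max (Ahat n \<omega>) (\<beta>hat n \<omega>) M C (\<kappa> n / sqrt (real n)) - theta_max A \<beta> M C\<bar>
          \<le> (real CARD('f) * real M * (C + 1) / C + 3 * L2) * (\<kappa> n / sqrt (real n))"
        by (intro det_max[OF C Ab ne L2(1) L2(2) ama am0 bmb]) auto
    qed
  qed
qed

end
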